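(* Let $V$ be a finite nonempty set and $f:\{0,1\}^V\to\{0,1\}^V$ an and-net. If for every $1\le k\le |V|$ there are at most $2^k-1$ points $x\in\{0,1\}^V$ such that $Gf(x)$ has a chordless positive cycle of length $k$, then $f$ has at most one fixed point.
   Context: For $x^{j\alpha}$ the point equal to $x$ except its $j$-component is $\alpha$, the local interaction graph $Gf(x)$ is the signed digraph on $V$ with a positive arc from $j$ to $i$ if $f_i(x^{j1})-f_i(x^{j0})=1$ and a negative arc if it equals $-1$; the global interaction graph $G(f)$ has a positive (resp. negative) arc from $j$ to $i$ iff such an arc exists in $Gf(x)$ for at least one $x$. $f$ is an and-net if $G(f)$ has at most one arc from $j$ to $i$ for all $i,j$ and for every $i$ and $x$: $f_i(x)=1$ iff $G(f)$ has no positive arc $j\to i$ with $x_j=0$ and no negative arc $j\to i$ with $x_j=1$. A cycle of a signed digraph $G$ is a subgraph whose underlying unsigned digraph is a directed cycle (length = number of arcs); positive if it has an even number of negative arcs; chordless if its underlying unsigned digraph is an induced subgraph of the underlying unsigned digraph of $G$. *)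

theory Defs
  imports Main
begin

text \<open>Points of {0,1}^V are functions V \<Rightarrow> bool (True = 1).
  A signed digraph on V is a set of arcs (j, s, i): an arc from j to i with
  sign s (True = positive, False = negative).\<close>

type_synonym 'v sdigraph = "('v \<times> bool \<times> 'v) set"

definition local_graph :: "(('v \<Rightarrow> bool) \<Rightarrow> ('v \<Rightarrow> bool)) \<Rightarrow> ('v \<Rightarrow> bool) \<Rightarrow> 'v sdigraph" where
  "local_graph f x =
     {(j, True, i) | j i. f (x(j := True)) i \<and> \<not> f (x(j := False)) i} \<union>
     {(j, False, i) | j i. \<not> f (x(j := True)) i \<and> f (x(j := False)) i}"

definition global_graph :: "(('v \<Rightarrow> bool) \<Rightarrow> ('v \<Rightarrow> bool)) \<Rightarrow> 'v sdigraph" where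
  "global_graph f = (\<Union>x. local_graph f x)"

definition and_net :: "(('v \<Rightarrow> bool) \<Rightarrow> ('v \<Rightarrow> bool)) \<Rightarrow> bool" where
  "and_net f \<longleftrightarrow>
     (\<forall>j i. \<not> ((j, True, i) \<in> global_graph f \<and> (j, False, i) \<in> global_graph f)) \<and>
     (\<forall>i x. f x i \<longleftrightarrow>
        (\<forall>j. ((j, True, i) \<in> global_graph f \<longrightarrow> x j) \<and>
             ((j, False, i) \<in> global_graph f \<longrightarrow> \<not> x j)))"

text \<open>Chordless: every arc of G (of any sign) between cycle vertices is a cycle arc
  (underlying unsigned digraph of the cycle is induced).\<close>

definition has_chordless_pos_cycle :: "'v sdigraph \<Rightarrow> nat \<Rightarrow> bool" where
  "has_chordless_pos_cycle G k \<longleftrightarrow>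
     (\<exists>vs ss. length vs = k \<and> length ss = k \<and> k \<ge> 1 \<and> distinct vs \<and>
        (\<forall>t<k. (vs ! t, ss ! t, vs ! ((t + 1) mod k)) \<in> G) \<and>
        even (length (filter Not ss)) \<and>
        (\<forall>u\<in>set vs. \<forall>w\<in>set vs. (\<exists>s. (u, s, w) \<in> G) \<longrightarrow>
            (\<exists>t<k. u = vs ! t \<and> w = vs ! ((t + 1) mod k))))"

end

theory Submission imports Defs begin

definition inclosed :: "('v \<Rightarrow> 'v \<Rightarrow> bool) \<Rightarrow> 'v set \<Rightarrow> bool" where
  "inclosed E X \<longleftrightarrow> (\<forall>x\<in>X. \<exists>w\<in>X. E w x)"
definition outclosed :: "('v \<Rightarrow> 'v \<Rightarrow> bool) \<Rightarrow> 'v set \<Rightarrow> bool" where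
  "outclosed E X \<longleftrightarrow> (\<forall>x\<in>X. \<exists>w\<in>X. E x w)"
definition mincl :: "('v \<Rightarrow> 'v \<Rightarrow> bool) \<Rightarrow> 'v set \<Rightarrow> bool" where
  "mincl E C \<longleftrightarrow> C \<noteq> {} \<and> inclosed E C \<and> (\<forall>X\<subseteq>C. X \<noteq> {} \<longrightarrow> inclosed E X \<longrightarrow> X = C)"

lemma minimal_subset:
  assumes "finite Y" "P Y" shows "\<exists>Z\<subseteq>Y. P Z \<and> (\<forall>Z'\<subseteq>Z. P Z' \<longrightarrow> Z' = Z)"
  using assms
proof (induction "card Y" arbitrary: Y rule: less_induct)
  case less
  show ?case
  proof (cases "\<exists>Z'\<subset>Y. P Z'")
    case True
    then obtain Z' where Z': "Z' \<subset> Y" "P Z'" by blast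
    have "card Z' < card Y" using Z'(1) less.prems(1) by (simp add: psubset_card_mono)
    moreover have "finite Z'" using Z'(1) less.prems(1) finite_subset by blast
    ultimately obtain Z where "Z \<subseteq> Z'" "P Z" "\<forall>Z''\<subseteq>Z. P Z'' \<longrightarrow> Z'' = Z"
      using less.hyps Z'(2) by blast
    then show ?thesis using Z'(1) by blast
  next
    case False
    then show ?thesis using less.prems by (metis psubsetI order_refl)
  qed
qed

lemma mincl_exists:
  assumes "finite X" "X \<noteq> {}" "inclosed E X" shows "\<exists>C\<subseteq>X. mincl E C"
  using minimal_subset[of X "\<lambda>Z. Z \<noteq> {} \<and> inclosed E Z"] assms unfolding mincl_def by (metis (no_types, lifting))

lemma funpow_in: "(\<forall>d\<in>C. s d \<in> C) \<Longrightarrow> c \<in> C \<Longrightarrow> (s^^n) c \<in> C"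
  by (induction n) auto

lemma mincl_choice_surj:
  assumes m: "mincl E C" and q: "\<forall>d\<in>C. q d \<in> C \<and> E (q d) d"
  shows "q ` C = C"
proof
  show "q ` C \<subseteq> C" using q by auto
  show "C \<subseteq> q ` C"
  proof
    fix d assume d: "d \<in> C"
    let ?O = "range (\<lambda>n. (q^^n) (q d))"
    have qd: "q d \<in> C" using q d by auto
    have sub: "?O \<subseteq> C" using funpow_in[of C q "q d"] q qd by auto
    have ne: "?O \<noteq> {}" by auto
    have ic: "inclosed E ?O" unfolding inclosed_def
    proof
      fix x assume "x \<in> ?O"
      then obtain n where x: "x = (q^^n) (q d)" by auto
      have "(q^^Suc n) (q d) \<in> ?O" by blast
      moreover have "E ((q^^Suc n) (q d)) x" using q x sub \<open>x \<in> ?O\<close> by auto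
      ultimately show "\<exists>w\<in>?O. E w x" by blast
    qed
    have "?O = C" using m sub ne ic unfolding mincl_def by blast
    then obtain n where "d = (q^^n) (q d)" using d by (metis rangeE)
    also have "\<dots> = q ((q^^n) d)" by (simp add: funpow_swap1)
    finally show "d \<in> q ` C" using funpow_in[of C q d n] q d by auto
  qed
qed

lemma mincl_choice:
  assumes "mincl E C" shows "\<exists>q. \<forall>d\<in>C. q d \<in> C \<and> E (q d) d"
proof -
  have "\<forall>d\<in>C. \<exists>w. w \<in> C \<and> E w d" using assms unfolding mincl_def inclosed_def by blast
  then show ?thesis by metis
qed

lemma mincl_U1:
  assumes fin: "finite C" and m: "mincl E C" and c: "c\<in>C" "w1\<in>C" "w2\<in>C" "E w1 c" "E w2 c"
  shows "w1 = w2"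
proof (rule ccontr)
  assume ne: "w1 \<noteq> w2"
  obtain q0 where q0: "\<forall>d\<in>C. q0 d \<in> C \<and> E (q0 d) d" using mincl_choice[OF m] by blast
  define q1 where "q1 = q0(c := w1)"
  define q2 where "q2 = q0(c := w2)"
  have "\<forall>d\<in>C. q1 d \<in> C \<and> E (q1 d) d" using q0 c unfolding q1_def by auto
  hence s1: "q1 ` C = C" using mincl_choice_surj m by blast
  have "\<forall>d\<in>C. q2 d \<in> C \<and> E (q2 d) d" using q0 c unfolding q2_def by auto
  hence s2: "q2 ` C = C" using mincl_choice_surj m by blast
  have inj1: "inj_on q1 C" using s1 fin finite_surj_inj by (metis order_refl)
  obtain d where d: "d \<in> C" "q2 d = w1" using s2 c(2) by (metis imageE)
  have "d \<noteq> c" using d ne unfolding q2_def by auto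
  hence "q1 d = w1" using d unfolding q1_def q2_def by auto
  moreover have "q1 c = w1" unfolding q1_def by simp
  ultimately have "d = c" using inj1 d c(1) by (metis inj_onD)
  with \<open>d \<noteq> c\<close> show False by simp
qed

lemma mincl_out:
  assumes fin: "finite C" and m: "mincl E C" and d: "d \<in> C" shows "\<exists>e\<in>C. E d e"
proof -
  obtain q0 where q0: "\<forall>d\<in>C. q0 d \<in> C \<and> E (q0 d) d" using mincl_choice[OF m] by blast
  have "q0 ` C = C" using mincl_choice_surj m q0 by blast
  then obtain e where e: "e \<in> C" "d = q0 e" using d by (metis imageE)
  have "E (q0 e) e" using q0 e(1) by blast
  then show ?thesis using e by blast
qed

lemma mincl_U2:
  assumes fin: "finite C" and m: "mincl E C" and c: "u\<in>C" "a\<in>C" "b\<in>C" "E u a" "E u b"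
  shows "a = b"
proof -
  obtain q0 where q0: "\<forall>d\<in>C. q0 d \<in> C \<and> E (q0 d) d" using mincl_choice[OF m] by blast
  have "q0 ` C = C" using mincl_choice_surj m q0 by blast
  hence inj: "inj_on q0 C" using fin finite_surj_inj by (metis order_refl)
  have "q0 a \<in> C" "E (q0 a) a" using q0 c(2) by blast+
  hence "q0 a = u" using mincl_U1[OF fin m c(2) _ c(1)] c(4) by blast
  moreover have "q0 b \<in> C" "E (q0 b) b" using q0 c(3) by blast+
  hence "q0 b = u" using mincl_U1[OF fin m c(3) _ c(1)] c(5) by blast
  ultimately show ?thesis using inj c by (metis inj_onD)
qed


lemma funpow_cancel:
  assumes inj: "inj_on s C" and cl: "\<forall>d\<in>C. s d \<in> C"
  shows "a\<in>C \<Longrightarrow> b\<in>C \<Longrightarrow> (s^^i) a = (s^^i) b \<Longrightarrow> a = b"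
proof (induction i arbitrary: a b)
  case 0 then show ?case by simp
next
  case (Suc i)
  have "(s^^i) (s a) = (s^^i) (s b)" using Suc.prems(3) by (simp add: funpow_swap1)
  moreover have "s a \<in> C" "s b \<in> C" using cl Suc.prems by auto
  ultimately have "s a = s b" using Suc.IH by blast
  then show ?case using inj Suc.prems(1,2) by (metis inj_onD)
qed

lemma funpow_split: "i \<le> j \<Longrightarrow> (s^^j) x = (s^^i) ((s^^(j-i)) x)"
proof -
  assume "i \<le> j"
  hence "j = i + (j - i)" by simp
  hence "(s^^j) x = (s^^(i + (j-i))) x" by simp
  also have "\<dots> = (s^^i) ((s^^(j-i)) x)" by (simp only: funpow_add comp_apply)
  finally show ?thesis .
qed

lemma mincl_list:
  assumes fin: "finite C" and m: "mincl E C"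
  shows "\<exists>vs. set vs = C \<and> distinct vs \<and> vs \<noteq> [] \<and>
     (\<forall>t<length vs. E (vs!t) (vs!((t+1) mod length vs))) \<and>
     (\<forall>u\<in>C. \<forall>w\<in>C. E u w \<longrightarrow> (\<exists>t<length vs. u = vs!t \<and> w = vs!((t+1) mod length vs)))"
proof -
  have "\<forall>d\<in>C. \<exists>e. e \<in> C \<and> E d e" using mincl_out[OF fin m] by blast
  then obtain s where s: "\<forall>d\<in>C. s d \<in> C \<and> E d (s d)" by metis
  have cl: "\<forall>d\<in>C. s d \<in> C" using s by blast
  have inj: "inj_on s C"
  proof (rule inj_onI)
    fix a b assume ab: "a \<in> C" "b \<in> C" "s a = s b"
    have "s a \<in> C" "E a (s a)" "E b (s a)" using s ab by auto
    then show "a = b" using mincl_U1[OF fin m \<open>s a \<in> C\<close> ab(1) ab(2)] by blast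
  qed
  obtain c0 where c0: "c0 \<in> C" using m unfolding mincl_def by blast
  let ?g = "\<lambda>i. (s^^i) c0"
  have gin: "\<And>i. ?g i \<in> C" using funpow_in[OF cl c0] by blast
  have ret: "\<exists>n. 0 < n \<and> (s^^n) c0 = c0"
  proof -
    have "\<not> inj_on ?g {..card C}"
    proof
      assume "inj_on ?g {..card C}"
      hence "card (?g ` {..card C}) = card {..card C}" by (rule card_image)
      moreover have "?g ` {..card C} \<subseteq> C" using gin by auto
      moreover have "card (?g ` {..card C}) \<le> card C" using card_mono[OF fin] calculation(2) by blast
      ultimately show False by simp
    qed
    then obtain i j where ij: "i \<le> card C" "j \<le> card C" "i \<noteq> j" "?g i = ?g j"
      unfolding inj_on_def by blast
    show ?thesis
    proof (cases "i < j")
      case True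
      have "?g j = (s^^i) ((s^^(j-i)) c0)" using True funpow_split[of i j] by simp
      hence "(s^^i) c0 = (s^^i) ((s^^(j-i)) c0)" using ij(4) by simp
      hence "c0 = (s^^(j-i)) c0" using funpow_cancel[OF inj cl c0 gin] by blast
      then show ?thesis using True by (metis zero_less_diff)
    next
      case False
      hence ji: "j < i" using ij(3) by simp
      have "?g i = (s^^j) ((s^^(i-j)) c0)" using ji funpow_split[of j i] by simp
      hence "(s^^j) c0 = (s^^j) ((s^^(i-j)) c0)" using ij(4) by simp
      hence "c0 = (s^^(i-j)) c0" using funpow_cancel[OF inj cl c0 gin] by blast
      then show ?thesis using ji by (metis zero_less_diff)
    qed
  qed
  define k where "k = (LEAST n. 0 < n \<and> (s^^n) c0 = c0)"
  have k: "0 < k" "(s^^k) c0 = c0" using LeastI_ex[OF ret] unfolding k_def by auto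
  have kmin: "\<And>n. 0 < n \<Longrightarrow> n < k \<Longrightarrow> (s^^n) c0 \<noteq> c0"
    using not_less_Least unfolding k_def by blast
  define vs where "vs = map ?g [0..<k]"
  have len: "length vs = k" unfolding vs_def by simp
  have nth: "\<And>t. t < k \<Longrightarrow> vs!t = ?g t" unfolding vs_def by simp
  have step: "\<And>t. t < k \<Longrightarrow> vs!((t+1) mod k) = s (vs!t)"
  proof -
    fix t assume t: "t < k"
    show "vs!((t+1) mod k) = s (vs!t)"
    proof (cases "t + 1 < k")
      case True
      then show ?thesis using nth t by simp
    next
      case False
      hence "t + 1 = k" using t by simp
      hence "(t+1) mod k = 0" by simp
      moreover have "s (?g t) = ?g (t+1)" by simp
      moreover have "?g (t+1) = c0" using k(2) \<open>t+1 = k\<close> by simp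
      ultimately show ?thesis using nth[of 0] nth[OF t] k(1) by simp
    qed
  qed
  have dist: "distinct vs"
  proof -
    have "\<And>i j. i < k \<Longrightarrow> j < k \<Longrightarrow> i < j \<Longrightarrow> ?g i \<noteq> ?g j"
    proof
      fix i j assume ij: "i < k" "j < k" "i < j" "?g i = ?g j"
      have "?g j = (s^^i) ((s^^(j-i)) c0)" using ij(3) funpow_split[of i j] by simp
      hence "(s^^i) c0 = (s^^i) ((s^^(j-i)) c0)" using ij(4) by simp
      hence "c0 = (s^^(j-i)) c0" using funpow_cancel[OF inj cl c0 gin] by blast
      moreover have "0 < j - i" "j - i < k" using ij by auto
      ultimately show False using kmin by metis
    qed
    then show ?thesis unfolding distinct_conv_nth len
    proof (intro allI impI)
      fix i j assume H: "\<And>i j. i < k \<Longrightarrow> j < k \<Longrightarrow> i < j \<Longrightarrow> ?g i \<noteq> ?g j"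
        and ij: "i < k" "j < k" "i \<noteq> j"
      show "vs!i \<noteq> vs!j"
      proof (cases "i < j")
        case True then show ?thesis using H ij nth by simp
      next
        case False hence "j < i" using ij by simp
        then show ?thesis using H[of j i] ij nth by auto
      qed
    qed
  qed
  have setsub: "set vs \<subseteq> C" unfolding vs_def using gin by auto
  have setic: "inclosed E (set vs)" unfolding inclosed_def
  proof
    fix x assume "x \<in> set vs"
    then obtain t where t: "t < k" "x = vs!t" using len by (metis in_set_conv_nth)
    show "\<exists>w\<in>set vs. E w x"
    proof (cases t)
      case 0
      have "k - 1 < k" using k by simp
      hence "vs!((k-1+1) mod k) = s (vs!(k-1))" using step by blast
      hence "x = s (vs!(k-1))" using t 0 k by simp
      moreover have "vs!(k-1) \<in> set vs" using \<open>k-1<k\<close> len by simp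
      moreover have "E (vs!(k-1)) (s (vs!(k-1)))" using s setsub calculation(2) by blast
      ultimately show ?thesis by metis
    next
      case (Suc t')
      have "t' < k" using t Suc by simp
      hence "vs!((t'+1) mod k) = s (vs!t')" using step by blast
      hence "x = s (vs!t')" using t Suc by simp
      moreover have "vs!t' \<in> set vs" using \<open>t'<k\<close> len by simp
      moreover have "E (vs!t') (s (vs!t'))" using s setsub calculation(2) by blast
      ultimately show ?thesis by metis
    qed
  qed
  have ne0: "set vs \<noteq> {}" using len k by auto
  have setC: "set vs = C"
    using m setsub setic ne0 unfolding mincl_def by blast
  have ne: "vs \<noteq> []" using len k by auto
  have arcs: "\<forall>t<length vs. E (vs!t) (vs!((t+1) mod length vs))"
  proof (intro allI impI)
    fix t assume "t < length vs"
    hence "vs!t \<in> C" using setC by (metis nth_mem)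
    then show "E (vs!t) (vs!((t+1) mod length vs))" using step \<open>t < length vs\<close> len s by simp
  qed
  have sur: "s ` C = C" using endo_inj_surj[OF fin _ inj] cl by blast
  have ind: "\<forall>u\<in>C. \<forall>w\<in>C. E u w \<longrightarrow> (\<exists>t<length vs. u = vs!t \<and> w = vs!((t+1) mod length vs))"
  proof (intro ballI impI)
    fix u w assume uw: "u \<in> C" "w \<in> C" "E u w"
    obtain v where v: "v \<in> C" "w = s v" using sur uw(2) by (metis imageE)
    have "E v w" using s v by blast
    hence "v = u" using mincl_U1[OF fin m uw(2) v(1) uw(1)] uw(3) by blast
    obtain t where t: "t < length vs" "u = vs!t" using uw(1) setC by (metis in_set_conv_nth)
    have "w = vs!((t+1) mod length vs)" using step t len v \<open>v = u\<close> by simp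
    then show "\<exists>t<length vs. u = vs!t \<and> w = vs!((t+1) mod length vs)" using t by blast
  qed
  show ?thesis using setC dist ne arcs ind by blast
qed


definition good :: "('v \<Rightarrow> 'v \<Rightarrow> bool) \<Rightarrow> ('v \<Rightarrow> bool) \<Rightarrow> 'v set \<Rightarrow> 'v set \<Rightarrow> bool" where
  "good E L S C \<longleftrightarrow> (\<forall>r\<in>S-C. \<forall>a\<in>C. \<forall>b\<in>C. E r a \<longrightarrow> E r b \<longrightarrow> L a = L b)"

lemma mincl_min: "mincl E C \<Longrightarrow> X \<subseteq> C \<Longrightarrow> X \<noteq> {} \<Longrightarrow> inclosed E X \<Longrightarrow> X = C"
  unfolding mincl_def by blast

lemma outclosed_to_inclosed:
  assumes "finite Y" "Y \<noteq> {}" "outclosed E Y"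
  shows "\<exists>Z\<subseteq>Y. Z \<noteq> {} \<and> inclosed E Z"
proof -
  obtain Z where Z: "Z \<subseteq> Y" "Z \<noteq> {} \<and> outclosed E Z"
    "\<forall>Z'\<subseteq>Z. Z' \<noteq> {} \<and> outclosed E Z' \<longrightarrow> Z' = Z"
    using minimal_subset[of Y "\<lambda>Z. Z \<noteq> {} \<and> outclosed E Z", OF assms(1)] assms(2,3) by auto
  have "inclosed E Z" unfolding inclosed_def
  proof (rule ccontr)
    assume "\<not> (\<forall>x\<in>Z. \<exists>w\<in>Z. E w x)"
    then obtain c where c: "c \<in> Z" "\<forall>w\<in>Z. \<not> E w c" by blast
    have oc: "outclosed E (Z - {c})" unfolding outclosed_def
    proof
      fix d assume d: "d \<in> Z - {c}"
      then obtain z where "z \<in> Z" "E d z" using Z(2) unfolding outclosed_def by blast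
      then show "\<exists>w\<in>Z - {c}. E d w" using c d by blast
    qed
    have "Z - {c} \<noteq> {}"
    proof
      assume "Z - {c} = {}"
      hence "Z = {c}" using c by blast
      then obtain z where "z \<in> Z" "E c z" using Z(2) c unfolding outclosed_def by blast
      then show False using c \<open>Z = {c}\<close> by blast
    qed
    hence "Z - {c} = Z" by (intro Z(3)[rule_format]) (use oc in auto)
    then show False using c by blast
  qed
  then show ?thesis using Z by blast
qed

lemma main_lemma:
  assumes "finite S" "S \<noteq> {}" "\<forall>s\<in>S. \<exists>t\<in>S. E t s"
  shows "\<exists>C\<subseteq>S. mincl E C \<and> good E L S C"
  using assms
proof (induction "card S" arbitrary: S E rule: less_induct)
  case less
  note fin = less.prems(1) and ne = less.prems(2) and hin = less.prems(3)
  show ?case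
  proof (cases "\<exists>X\<subseteq>S. X \<noteq> {} \<and> inclosed E X \<and> (\<forall>a\<in>X. \<forall>b\<in>X. L a = L b)")
    case True
    then obtain X where X: "X\<subseteq>S" "X\<noteq>{}" "inclosed E X" "\<forall>a\<in>X. \<forall>b\<in>X. L a = L b" by blast
    have "finite X" using X(1) fin finite_subset by blast
    then obtain C where C: "C \<subseteq> X" "mincl E C" using mincl_exists[OF _ X(2) X(3)] by blast
    have "good E L S C" unfolding good_def
    proof (intro ballI impI)
      fix r a b assume H: "r \<in> S - C" "a \<in> C" "b \<in> C" "E r a" "E r b"
      have "a \<in> X" "b \<in> X" using H(2,3) C(1) by auto
      then show "L a = L b" using X(4) by blast
    qed
    then show ?thesis using C X(1) by blast
  next
    case nocyc: False
    show ?thesis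
    proof (cases "\<exists>y\<in>S. \<exists>u\<in>S. u \<noteq> y \<and> E u y \<and> (\<forall>w\<in>S. E w y \<longrightarrow> w = u)")
      case True
      then obtain y u where yu: "y\<in>S" "u\<in>S" "u\<noteq>y" "E u y" "\<forall>w\<in>S. E w y \<longrightarrow> w = u" by blast
      define E' where "E' a b \<longleftrightarrow> E a b \<or> (a = u \<and> E y b)" for a b
      define S' where "S' = S - {y}"
      have lt: "card S' < card S" unfolding S'_def by (rule card_Diff1_less[OF fin yu(1)])
      have fin': "finite S'" using fin unfolding S'_def by simp
      have uS': "u \<in> S'" using yu(2,3) unfolding S'_def by simp
      hence ne': "S' \<noteq> {}" by blast
      have hin': "\<forall>s\<in>S'. \<exists>t\<in>S'. E' t s"
      proof
        fix s assume s: "s \<in> S'"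
        then obtain t where t: "t \<in> S" "E t s" using hin unfolding S'_def by blast
        show "\<exists>t\<in>S'. E' t s"
        proof (cases "t = y")
          case True then show ?thesis using uS' t unfolding E'_def by blast
        next
          case False then show ?thesis using t unfolding E'_def S'_def by blast
        qed
      qed
      obtain C' where C': "C' \<subseteq> S'" "mincl E' C'" "good E' L S' C'"
        using less.hyps[OF lt fin' ne' hin'] by blast
      have finC': "finite C'" using C'(1) fin' finite_subset by blast
      have EE': "\<And>a b. E a b \<Longrightarrow> E' a b" by (simp add: E'_def)
      have C'ne: "C' \<noteq> {}" using C'(2) unfolding mincl_def by blast
      have yC': "y \<notin> C'" using C'(1) unfolding S'_def by blast
      have minE: "\<And>X. X \<subseteq> C' \<Longrightarrow> X \<noteq> {} \<Longrightarrow> inclosed E X \<Longrightarrow> X = C'"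
      proof -
        fix X assume X: "X \<subseteq> C'" "X \<noteq> {}" "inclosed E X"
        have "inclosed E' X" using X(3) EE' unfolding inclosed_def by blast
        then show "X = C'" using mincl_min[OF C'(2) X(1,2)] by blast
      qed
      have goodrest: "\<And>r a b. r \<in> S - C' \<Longrightarrow> r \<noteq> y \<Longrightarrow> a \<in> C' \<Longrightarrow> b \<in> C' \<Longrightarrow> E r a \<Longrightarrow> E r b \<Longrightarrow> L a = L b"
      proof -
        fix r a b assume H: "r \<in> S - C'" "r \<noteq> y" "a \<in> C'" "b \<in> C'" "E r a" "E r b"
        have "r \<in> S' - C'" using H unfolding S'_def by blast
        then show "L a = L b" using C'(3) H EE' unfolding good_def by blast
      qed
      show ?thesis
      proof (cases "u \<in> C'")
        case False
        have ic: "inclosed E C'" unfolding inclosed_def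
        proof
          fix d assume d: "d \<in> C'"
          then obtain w where w: "w \<in> C'" "E' w d" using C'(2) unfolding mincl_def inclosed_def by blast
          have "w \<noteq> u" using w False by blast
          then show "\<exists>w\<in>C'. E w d" using w unfolding E'_def by blast
        qed
        have mc: "mincl E C'" unfolding mincl_def using ic minE C'ne by blast
        have gd: "good E L S C'" unfolding good_def
        proof (intro ballI impI)
          fix r a b assume H: "r \<in> S - C'" "a \<in> C'" "b \<in> C'" "E r a" "E r b"
          show "L a = L b"
          proof (cases "r = y")
            case True
            have "E' u a" "E' u b" using H True unfolding E'_def by auto
            moreover have "u \<in> S' - C'" using uS' False by blast
            ultimately show ?thesis using C'(3) H unfolding good_def by blast
          next
            case False then show ?thesis using goodrest H by blast
          qed
        qed
        show ?thesis using mc gd C'(1) unfolding S'_def by blast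
      next
        case uC: True
        obtain c where c: "c \<in> C'" "E' u c" using mincl_out[OF finC' C'(2) uC] by blast
        have U2: "\<And>a. a \<in> C' \<Longrightarrow> E' u a \<Longrightarrow> a = c"
          using mincl_U2[OF finC' C'(2) uC] c by blast
        show ?thesis
        proof (cases "E u c")
          case True
          have ic: "inclosed E C'" unfolding inclosed_def
          proof
            fix d assume d: "d \<in> C'"
            then obtain w where w: "w \<in> C'" "E' w d" using C'(2) unfolding mincl_def inclosed_def by blast
            show "\<exists>w\<in>C'. E w d"
            proof (cases "E w d")
              case True then show ?thesis using w by blast
            next
              case False
              hence "w = u" "E y d" using w unfolding E'_def by auto
              hence "d = c" using U2 d w by blast
              then show ?thesis using True uC by blast
            qed
          qed
          have mc: "mincl E C'" unfolding mincl_def using ic minE C'ne by blast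
          have gd: "good E L S C'" unfolding good_def
          proof (intro ballI impI)
            fix r a b assume H: "r \<in> S - C'" "a \<in> C'" "b \<in> C'" "E r a" "E r b"
            show "L a = L b"
            proof (cases "r = y")
              case True
              have "E' u a" "E' u b" using H True unfolding E'_def by auto
              hence "a = c" "b = c" using U2 H by auto
              then show ?thesis by simp
            next
              case False then show ?thesis using goodrest H by blast
            qed
          qed
          show ?thesis using mc gd C'(1) unfolding S'_def by blast
        next
          case False
          have Eyc: "E y c" using c False unfolding E'_def by blast
          let ?C = "insert y C'"
          have sub: "?C \<subseteq> S" using C'(1) yu(1) unfolding S'_def by blast
          have ic: "inclosed E ?C" unfolding inclosed_def
          proof
            fix d assume d: "d \<in> ?C"
            show "\<exists>w\<in>?C. E w d"
            proof (cases "d = y")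
              case True then show ?thesis using yu(4) uC by blast
            next
              case dy: False
              hence "d \<in> C'" using d by blast
              then obtain w where w: "w \<in> C'" "E' w d" using C'(2) unfolding mincl_def inclosed_def by blast
              show ?thesis
              proof (cases "E w d")
                case True then show ?thesis using w by blast
              next
                case False
                hence "E y d" using w unfolding E'_def by auto
                then show ?thesis by blast
              qed
            qed
          qed
          have mn: "\<forall>X\<subseteq>?C. X \<noteq> {} \<longrightarrow> inclosed E X \<longrightarrow> X = ?C"
          proof (intro allI impI)
            fix X assume X: "X \<subseteq> ?C" "X \<noteq> {}" "inclosed E X"
            let ?X' = "X - {y}"
            have ic': "inclosed E' ?X'" unfolding inclosed_def
            proof
              fix d assume d: "d \<in> ?X'"
              then obtain e where e: "e \<in> X" "E e d" using X(3) unfolding inclosed_def by blast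
              show "\<exists>w\<in>?X'. E' w d"
              proof (cases "e = y")
                case False then show ?thesis using e EE' by blast
              next
                case True
                then obtain w where w: "w \<in> X" "E w y" using X(3) e unfolding inclosed_def by blast
                have "w \<in> S" using w X(1) sub by blast
                hence "w = u" using yu(5) w by blast
                hence "u \<in> ?X'" using w yu(3) by blast
                moreover have "E' u d" using e True unfolding E'_def by blast
                ultimately show ?thesis by blast
              qed
            qed
            have ne'': "?X' \<noteq> {}"
            proof
              assume "?X' = {}"
              hence "X = {y}" using X(1,2) by blast
              then obtain w where "w \<in> X" "E w y" using X(3) unfolding inclosed_def by blast
              hence "w = y" using \<open>X = {y}\<close> by blast
              hence "y = u" using yu(5) yu(1) \<open>E w y\<close> by blast
              then show False using yu(3) by simp
            qed
            have "?X' \<subseteq> C'" using X(1) by blast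
            hence X'eq: "?X' = C'" using mincl_min[OF C'(2) _ ne'' ic'] by blast
            have "c \<in> X" using X'eq c(1) by blast
            then obtain e where e: "e \<in> X" "E e c" using X(3) unfolding inclosed_def by blast
            have "e = y"
            proof (rule ccontr)
              assume "e \<noteq> y"
              hence "e \<in> C'" using e X'eq by blast
              hence "e = u" using mincl_U1[OF finC' C'(2) c(1) _ uC] e c EE' by blast
              then show False using e False by simp
            qed
            hence "y \<in> X" using e by simp
            then show "X = ?C" using X'eq by blast
          qed
          have mc: "mincl E ?C" unfolding mincl_def using ic mn by blast
          have gd: "good E L S ?C" unfolding good_def
          proof (intro ballI impI)
            fix r a b assume H: "r \<in> S - ?C" "a \<in> ?C" "b \<in> ?C" "E r a" "E r b"
            have ry: "r \<noteq> y" "r \<in> S - C'" using H by auto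
            have "a \<noteq> y"
            proof
              assume "a = y" hence "r = u" using yu(5) H by blast
              then show False using H uC by blast
            qed
            moreover have "b \<noteq> y"
            proof
              assume "b = y" hence "r = u" using yu(5) H by blast
              then show False using H uC by blast
            qed
            ultimately show "L a = L b" using goodrest ry H by blast
          qed
          show ?thesis using mc gd sub by blast
        qed
      qed
    next
      case nolight: False
      have "\<exists>v\<in>S. \<forall>a\<in>S. \<forall>b\<in>S. E v a \<longrightarrow> E v b \<longrightarrow> L a = L b"
      proof (rule ccontr)
        assume "\<not> ?thesis"
        hence both: "\<forall>v\<in>S. \<exists>a\<in>S. E v a \<and> L a" by metis
        define Y where "Y = {s\<in>S. L s}"
        have "Y \<noteq> {}" using both ne unfolding Y_def by blast
        moreover have "outclosed E Y" using both unfolding outclosed_def Y_def by blast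
        moreover have "finite Y" using fin unfolding Y_def by simp
        ultimately obtain Z where "Z \<subseteq> Y" "Z \<noteq> {}" "inclosed E Z" using outclosed_to_inclosed by blast
        moreover have "\<forall>a\<in>Z. \<forall>b\<in>Z. L a = L b" using calculation(1) unfolding Y_def by blast
        moreover have "Z \<subseteq> S" using calculation(1) unfolding Y_def by blast
        ultimately show False using nocyc by blast
      qed
      then obtain v where v: "v \<in> S" "\<forall>a\<in>S. \<forall>b\<in>S. E v a \<longrightarrow> E v b \<longrightarrow> L a = L b" by blast
      define S' where "S' = S - {v}"
      have lt: "card S' < card S" unfolding S'_def by (rule card_Diff1_less[OF fin v(1)])
      have fin': "finite S'" using fin unfolding S'_def by simp
      have ne': "S' \<noteq> {}"
      proof
        assume "S' = {}"
        hence Sv: "S = {v}" using v(1) unfolding S'_def by blast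
        then obtain t where "t \<in> S" "E t v" using hin v(1) by blast
        hence "E v v" using Sv by blast
        hence "inclosed E {v}" unfolding inclosed_def by blast
        then show False using nocyc Sv by blast
      qed
      have hin': "\<forall>s\<in>S'. \<exists>t\<in>S'. E t s"
      proof
        fix s assume s: "s \<in> S'"
        show "\<exists>t\<in>S'. E t s"
        proof (rule ccontr)
          assume nt: "\<not> (\<exists>t\<in>S'. E t s)"
          obtain t where t: "t \<in> S" "E t s" using hin s unfolding S'_def by blast
          have tv: "t = v" using nt t unfolding S'_def by blast
          have "\<forall>w\<in>S. E w s \<longrightarrow> w = v" using nt unfolding S'_def by blast
          moreover have "v \<noteq> s" using s unfolding S'_def by blast
          ultimately show False using nolight v(1) s t tv unfolding S'_def by blast
        qed
      qed
      obtain C where C: "C \<subseteq> S'" "mincl E C" "good E L S' C"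
        using less.hyps[OF lt fin' ne' hin'] by blast
      have "good E L S C" unfolding good_def
      proof (intro ballI impI)
        fix r a b assume H: "r \<in> S - C" "a \<in> C" "b \<in> C" "E r a" "E r b"
        show "L a = L b"
        proof (cases "r = v")
          case True then show ?thesis using v H C(1) unfolding S'_def by blast
        next
          case False
          hence "r \<in> S' - C" using H unfolding S'_def by blast
          then show ?thesis using C(3) H unfolding good_def by blast
        qed
      qed
      then show ?thesis using C(1,2) unfolding S'_def by blast
    qed
  qed
qed


lemma sum_shift_mod:
  fixes g :: "nat \<Rightarrow> nat"
  assumes "0 < k"
  shows "(\<Sum>t<k. g ((t+1) mod k)) = (\<Sum>t<k. g t)"
proof -
  obtain m where k: "k = Suc m" using assms by (metis Suc_pred)
  have "(\<Sum>t<Suc m. g ((t+1) mod Suc m)) = (\<Sum>t<m. g ((t+1) mod Suc m)) + g ((m+1) mod Suc m)"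
    by simp
  also have "(\<Sum>t<m. g ((t+1) mod Suc m)) = (\<Sum>t<m. g (Suc t))"
    by (rule sum.cong) auto
  also have "g ((m+1) mod Suc m) = g 0" by simp
  also have "(\<Sum>t<m. g (Suc t)) + g 0 = (\<Sum>t<Suc m. g t)"
    by (subst sum.lessThan_Suc_shift) simp
  finally show ?thesis using k by simp
qed

lemma even_aux: "(x::nat) + 2 * y = a + a \<Longrightarrow> even x" by presburger

lemma cyc_even:
  fixes h :: "nat \<Rightarrow> bool"
  assumes "0 < k"
  shows "even (card {t. t < k \<and> h t \<noteq> h ((t+1) mod k)})"
proof -
  let ?d = "\<lambda>t. of_bool (h t \<noteq> h ((t+1) mod k)) :: nat"
  let ?c = "\<lambda>t. of_bool (h t \<and> h ((t+1) mod k)) :: nat"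
  let ?a = "\<lambda>t. of_bool (h t) :: nat"
  have pt: "\<And>t. ?d t + 2 * ?c t = ?a t + ?a ((t+1) mod k)" by auto
  have "(\<Sum>t<k. ?d t) + 2 * (\<Sum>t<k. ?c t) = (\<Sum>t<k. ?d t + 2 * ?c t)"
    by (simp only: sum.distrib sum_distrib_left)
  also have "\<dots> = (\<Sum>t<k. ?a t + ?a ((t+1) mod k))" by (simp only: pt)
  also have "\<dots> = (\<Sum>t<k. ?a t) + (\<Sum>t<k. ?a ((t+1) mod k))" by (simp only: sum.distrib)
  also have "(\<Sum>t<k. ?a ((t+1) mod k)) = (\<Sum>t<k. ?a t)"
    using sum_shift_mod[OF assms, of ?a] by (simp only:)
  finally have "even (\<Sum>t<k. ?d t)"
    by (rule even_aux)
  moreover have "{t. t < k \<and> h t \<noteq> h ((t+1) mod k)} = {..<k} \<inter> {t. h t \<noteq> h ((t+1) mod k)}" by auto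
  moreover have "(\<Sum>t<k. ?d t) = card ({..<k} \<inter> {t. h t \<noteq> h ((t+1) mod k)})"
    using sum_of_bool_eq[OF finite_lessThan[of k], of "\<lambda>t. h t \<noteq> h ((t+1) mod k)"] by simp
  ultimately show ?thesis by metis
qed

lemma loc_arc:
  assumes an: "and_net f" and pg: "(p,s,i) \<in> global_graph f"
    and oth: "\<forall>j. j \<noteq> p \<longrightarrow> ((j,True,i) \<in> global_graph f \<longrightarrow> z j) \<and> ((j,False,i) \<in> global_graph f \<longrightarrow> \<not> z j)"
  shows "(p,s,i) \<in> local_graph f z"
proof -
  have ch: "\<And>w. f w i \<longleftrightarrow> (\<forall>j. ((j,True,i) \<in> global_graph f \<longrightarrow> w j) \<and> ((j,False,i) \<in> global_graph f \<longrightarrow> \<not> w j))"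
    using an unfolding and_net_def by blast
  have nb: "\<not>((p,True,i) \<in> global_graph f \<and> (p,False,i) \<in> global_graph f)"
    using an unfolding and_net_def by blast
  show ?thesis
  proof (cases s)
    case True
    have "f (z(p:=True)) i" unfolding ch using oth nb pg True by auto
    moreover have "\<not> f (z(p:=False)) i" unfolding ch using pg True by auto
    ultimately show ?thesis unfolding local_graph_def using True by auto
  next
    case False
    have "f (z(p:=False)) i" unfolding ch using oth nb pg False by auto
    moreover have "\<not> f (z(p:=True)) i" unfolding ch using pg False by auto
    ultimately show ?thesis unfolding local_graph_def using False by auto
  qed
qed

lemma local_sub: "(a,s,b) \<in> local_graph f z \<Longrightarrow> (a,s,b) \<in> global_graph f"
  unfolding global_graph_def by blast


theorem corollary11:
  fixes f :: "('v::finite \<Rightarrow> bool) \<Rightarrow> ('v \<Rightarrow> bool)"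
  assumes "and_net f"
    and "\<forall>k. 1 \<le> k \<and> k \<le> card (UNIV :: 'v set) \<longrightarrow>
           card {x. has_chordless_pos_cycle (local_graph f x) k} \<le> 2 ^ k - 1"
  shows "card {x. f x = x} \<le> 1"
proof (rule ccontr)
  note an = assms(1) and hyp = assms(2)
  assume "\<not> ?thesis"
  then obtain x y where fx: "f x = x" and fy: "f y = y" and xy: "x \<noteq> y"
    using card_le_Suc0_iff_eq[of "{x. f x = x}"] by auto
  define G where "G = global_graph f"
  define E where "E j i \<longleftrightarrow> (j,True,i) \<in> G \<or> (j,False,i) \<in> G" for j i
  define sat where "sat z j i \<longleftrightarrow> ((j,True,i) \<in> G \<longrightarrow> z j) \<and> ((j,False,i) \<in> G \<longrightarrow> \<not> z j)"
    for z :: "'v \<Rightarrow> bool" and j i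
  have nb: "\<And>j i. \<not>((j,True,i) \<in> G \<and> (j,False,i) \<in> G)"
    using an unfolding and_net_def G_def by blast
  have fchar: "\<And>z i. f z i \<longleftrightarrow> (\<forall>j. sat z j i)"
    using an unfolding and_net_def sat_def G_def by blast
  have satcong: "\<And>z z' j i. z j = z' j \<Longrightarrow> sat z j i = sat z' j i"
    unfolding sat_def by simp
  have satE: "\<And>z j i. \<not> E j i \<Longrightarrow> sat z j i"
    unfolding sat_def E_def by blast
  define D where "D = {i. x i \<noteq> y i}"
  have Dne: "D \<noteq> {}" using xy unfolding D_def by auto
  define side where "side i = (if x i then x else y)" for i
  have side_sat: "\<And>i j. i \<in> D \<Longrightarrow> sat (side i) j i"
  proof -
    fix i j assume i: "i \<in> D"
    have "f (side i) i"
    proof (cases "x i")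
      case True then show ?thesis using fx unfolding side_def by simp
    next
      case False
      hence "y i" using i unfolding D_def by simp
      then show ?thesis using fy False unfolding side_def by simp
    qed
    then show "sat (side i) j i" using fchar by blast
  qed
  have hin: "\<forall>i\<in>D. \<exists>j\<in>D. E j i"
  proof
    fix i assume i: "i \<in> D"
    define op where "op = (if x i then y else x)"
    have "\<not> f op i"
    proof (cases "x i")
      case True
      hence "\<not> y i" using i unfolding D_def by simp
      then show ?thesis using fy True unfolding op_def by simp
    next
      case False then show ?thesis using fx unfolding op_def by simp
    qed
    then obtain j where j: "\<not> sat op j i" using fchar by blast
    have sj: "sat (side i) j i" using side_sat[OF i] .
    have "E j i" using j satE by blast
    moreover have "j \<in> D"
    proof (rule ccontr)
      assume "j \<notin> D"
      hence "x j = y j" unfolding D_def by simp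
      hence "op j = side i j" unfolding op_def side_def by simp
      then show False using satcong[of op j "side i" i] j sj by simp
    qed
    ultimately show "\<exists>j\<in>D. E j i" by blast
  qed
  have finD: "finite D" by simp
  obtain C where C: "C \<subseteq> D" "mincl E C" "good E x D C"
    using main_lemma[OF finD Dne hin] by blast
  have finC: "finite C" using C(1) finD finite_subset by blast
  obtain vs where vs: "set vs = C" "distinct vs" "vs \<noteq> []"
    "\<forall>t<length vs. E (vs!t) (vs!((t+1) mod length vs))"
    "\<forall>u\<in>C. \<forall>w\<in>C. E u w \<longrightarrow> (\<exists>t<length vs. u = vs!t \<and> w = vs!((t+1) mod length vs))"
    using mincl_list[OF finC C(2)] by blast
  define k where "k = length vs"
  have kpos: "0 < k" using vs(3) unfolding k_def by simp
  have cardC: "card C = k" using distinct_card[OF vs(2)] vs(1) unfolding k_def by simp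
  define ss where "ss = map (\<lambda>t. (vs!t, True, vs!((t+1) mod k)) \<in> G) [0..<k]"
  have sign: "\<And>a b. a \<in> D \<Longrightarrow> b \<in> D \<Longrightarrow> E a b \<Longrightarrow> ((a,True,b) \<in> G \<longleftrightarrow> x a = x b)"
  proof -
    fix a b assume ab: "a \<in> D" "b \<in> D" "E a b"
    have s: "sat (side b) a b" using side_sat[OF ab(2)] .
    have ya: "y a = (\<not> x a)" using ab(1) unfolding D_def by auto
    have yb: "y b = (\<not> x b)" using ab(2) unfolding D_def by auto
    show "(a,True,b) \<in> G \<longleftrightarrow> x a = x b"
    proof (cases "(a,True,b) \<in> G")
      case True
      hence "side b a" using s unfolding sat_def by blast
      hence "x a = x b" using ya unfolding side_def by (cases "x b") auto
      then show ?thesis using True by simp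
    next
      case False
      hence "(a,False,b) \<in> G" using ab(3) unfolding E_def by blast
      hence "\<not> side b a" using s unfolding sat_def by blast
      hence "x a \<noteq> x b" using ya unfolding side_def by (cases "x b") auto
      then show ?thesis using False by simp
    qed
  qed
  define Z where "Z P j = (if j \<in> C then j \<in> P else if j \<in> D \<and> (\<exists>a\<in>C. E j a \<and> x a) then x j else y j)"
    for P :: "'v set" and j
  have vsC: "\<And>t. t < k \<Longrightarrow> vs!t \<in> C" using vs(1) unfolding k_def by auto
  have key: "\<And>P. has_chordless_pos_cycle (local_graph f (Z P)) k"
  proof -
    fix P
    have arcs: "\<forall>t<k. (vs!t, ss!t, vs!((t+1) mod k)) \<in> local_graph f (Z P)"
    proof (intro allI impI)
      fix t assume t: "t < k"
      define a where "a = vs!t"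
      define b where "b = vs!((t+1) mod k)"
      have aC: "a \<in> C" using vsC t unfolding a_def by blast
      have bC: "b \<in> C" using vsC kpos unfolding b_def by simp
      have Eab: "E a b" using vs(4) t unfolding a_def b_def k_def by blast
      have sst: "ss!t = ((a,True,b) \<in> G)" using t unfolding ss_def a_def b_def by simp
      have ag: "(a, ss!t, b) \<in> G"
      proof (cases "(a,True,b) \<in> G")
        case True then show ?thesis using sst by simp
      next
        case False then show ?thesis using sst Eab unfolding E_def by simp
      qed
      have oth: "\<forall>j. j \<noteq> a \<longrightarrow> sat (Z P) j b"
      proof (intro allI impI)
        fix j assume ja: "j \<noteq> a"
        show "sat (Z P) j b"
        proof (cases "E j b")
          case False then show ?thesis using satE by blast
        next
          case True
          have jC: "j \<notin> C"
          proof
            assume "j \<in> C"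
            hence "j = a" using mincl_U1[OF finC C(2) bC _ aC] True Eab by blast
            then show False using ja by simp
          qed
          have bD: "b \<in> D" using bC C(1) by blast
          have "Z P j = side b j"
          proof (cases "j \<in> D \<and> (\<exists>a\<in>C. E j a \<and> x a)")
            case True
            then obtain a' where a': "a' \<in> C" "E j a'" "x a'" by blast
            have "j \<in> D - C" using True jC by blast
            hence "x a' = x b" using C(3) a' bC \<open>E j b\<close> unfolding good_def by blast
            hence "x b" using a'(3) by simp
            then show ?thesis using True jC unfolding Z_def side_def by simp
          next
            case False
            show ?thesis
            proof (cases "j \<in> D")
              case True
              hence "\<not> x b" using False bC \<open>E j b\<close> by blast
              then show ?thesis using False True jC unfolding Z_def side_def by auto
            next
              case jD: False
              hence "x j = y j" unfolding D_def by simp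
              then show ?thesis using False jC unfolding Z_def side_def by simp
            qed
          qed
          then show ?thesis using satcong[of "Z P" j "side b" b] side_sat[OF bD] by simp
        qed
      qed
      have "(a, ss!t, b) \<in> local_graph f (Z P)"
        using loc_arc[OF an, of a "ss!t" b "Z P"] ag oth unfolding G_def sat_def by blast
      then show "(vs!t, ss!t, vs!((t+1) mod k)) \<in> local_graph f (Z P)" unfolding a_def b_def .
    qed
    have ev: "even (length (filter Not ss))"
    proof -
      have l: "length ss = k" unfolding ss_def by simp
      have "length (filter Not ss) = card {t. t < k \<and> \<not> ss!t}"
        using length_filter_conv_card[of Not ss] l by simp
      also have "{t. t < k \<and> \<not> ss!t} = {t. t < k \<and> x (vs!t) \<noteq> x (vs!((t+1) mod k))}"
      proof (intro Collect_cong conj_cong refl)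
        fix t assume t: "t < k"
        have a: "vs!t \<in> D" using vsC t C(1) by blast
        have b: "vs!((t+1) mod k) \<in> D" using vsC kpos C(1) by auto
        have e: "E (vs!t) (vs!((t+1) mod k))" using vs(4) t unfolding k_def by blast
        show "(\<not> ss!t) = (x (vs!t) \<noteq> x (vs!((t+1) mod k)))"
          using sign[OF a b e] t unfolding ss_def by simp
      qed
      finally show ?thesis
        using cyc_even[OF kpos, of "\<lambda>t. x (vs!t)"] by simp
    qed
    have chl: "\<forall>u\<in>set vs. \<forall>w\<in>set vs. (\<exists>s. (u, s, w) \<in> local_graph f (Z P)) \<longrightarrow>
            (\<exists>t<k. u = vs ! t \<and> w = vs ! ((t + 1) mod k))"
    proof (intro ballI impI)
      fix u w assume uw: "u \<in> set vs" "w \<in> set vs" "\<exists>s. (u, s, w) \<in> local_graph f (Z P)"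
      from uw(3) obtain s where "(u,s,w) \<in> local_graph f (Z P)" by blast
      hence "(u,s,w) \<in> G" unfolding G_def by (rule local_sub)
      hence "E u w" unfolding E_def by (cases s) auto
      then show "\<exists>t<k. u = vs ! t \<and> w = vs ! ((t + 1) mod k)"
        using vs(5) uw vs(1) unfolding k_def by blast
    qed
    show "has_chordless_pos_cycle (local_graph f (Z P)) k"
    proof -
      have lvs: "length vs = k" unfolding k_def by simp
      have lss: "length ss = k" unfolding ss_def by simp
      have "length vs = k \<and> length ss = k \<and> k \<ge> 1 \<and> distinct vs \<and>
        (\<forall>t<k. (vs ! t, ss ! t, vs ! ((t + 1) mod k)) \<in> local_graph f (Z P)) \<and>
        even (length (filter Not ss)) \<and>
        (\<forall>u\<in>set vs. \<forall>w\<in>set vs. (\<exists>s. (u, s, w) \<in> local_graph f (Z P)) \<longrightarrow>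
            (\<exists>t<k. u = vs ! t \<and> w = vs ! ((t + 1) mod k)))"
        using lvs lss kpos vs(2) arcs ev chl by (intro conjI) auto
      then show ?thesis unfolding has_chordless_pos_cycle_def by blast
    qed
  qed
  have inj: "inj_on Z (Pow C)"
  proof (rule inj_onI)
    fix P Q assume PQ: "P \<in> Pow C" "Q \<in> Pow C" "Z P = Z Q"
    have "\<And>j. j \<in> C \<Longrightarrow> (j \<in> P) = (j \<in> Q)"
    proof -
      fix j assume "j \<in> C"
      have "Z P j = Z Q j" using PQ(3) by simp
      then show "(j \<in> P) = (j \<in> Q)" using \<open>j \<in> C\<close> unfolding Z_def by simp
    qed
    then show "P = Q" using PQ(1,2) by blast
  qed
  have sub: "Z ` Pow C \<subseteq> {z. has_chordless_pos_cycle (local_graph f z) k}" using key by blast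
  have "card (Z ` Pow C) = 2 ^ k" using card_image[OF inj] card_Pow[OF finC] cardC by simp
  hence ge: "2 ^ k \<le> card {z. has_chordless_pos_cycle (local_graph f z) k}"
    using card_mono[OF _ sub] by simp
  have "k \<le> card (UNIV :: 'v set)" using cardC card_mono[of UNIV C] by simp
  hence "card {z. has_chordless_pos_cycle (local_graph f z) k} \<le> 2 ^ k - 1"
    using hyp kpos by simp
  moreover have "(0::nat) < 2 ^ k" by simp
  ultimately show False using ge by linarith
qed

end
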